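(* Let $X$ be a topological space and $Y$ be a metrizable, connected and locally arcwise connected space. Then $\Sigma_0^{f*}(X,Y)\subseteq \mathrm{B}_1(X,Y)$.
   Context: Functionally closed/open sets: zero sets of continuous functions $X\to[0,1]$, resp. their complements. A family $(A_i:i\in I)$ of subsets of $X$ is strongly functionally discrete (sfd) if there is a discrete family $(U_i:i\in I)$ of functionally open sets with $\overline{A_i}\subseteq U_i$ for all $i$; $\sigma$-sfd means a countable union of sfd families. A family $\mathcal B$ is a base for $f:X\to Y$ if each $f^{-1}(V)$, $V\subseteq Y$ open, is a union of members of $\mathcal B$. $\Sigma^{f*}_0(X,Y)$: mappings $f:X\to Y$ having a $\sigma$-sfd base consisting of functionally closed subsets of $X$. $\mathrm{B}_1(X,Y)$: pointwise limits of sequences of continuous mappings $X\to Y$. *)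

theory Defs
  imports "HOL-Analysis.Analysis"
begin

definition arc_connectedin :: "'a topology \<Rightarrow> 'a set \<Rightarrow> bool" where
  "arc_connectedin X S \<longleftrightarrow> S \<subseteq> topspace X \<and>
     (\<forall>x\<in>S. \<forall>y\<in>S. x \<noteq> y \<longrightarrow>
        (\<exists>g. embedding_map (top_of_set {0..1::real}) (subtopology X S) g \<and> g 0 = x \<and> g 1 = y))"

definition locally_arc_connected_space :: "'a topology \<Rightarrow> bool" where
  "locally_arc_connected_space X \<longleftrightarrow> neighbourhood_base_of (arc_connectedin X) X"

definition functionally_closed :: "'a topology \<Rightarrow> 'a set \<Rightarrow> bool" where
  "functionally_closed X A \<longleftrightarrow>
     (\<exists>g. continuous_map X (top_of_set {0..1::real}) g \<and> A = {x \<in> topspace X. g x = 0})"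

definition functionally_open :: "'a topology \<Rightarrow> 'a set \<Rightarrow> bool" where
  "functionally_open X U \<longleftrightarrow> U \<subseteq> topspace X \<and> functionally_closed X (topspace X - U)"

definition discrete_family :: "'a topology \<Rightarrow> 'i set \<Rightarrow> ('i \<Rightarrow> 'a set) \<Rightarrow> bool" where
  "discrete_family X I U \<longleftrightarrow>
     (\<forall>x\<in>topspace X. \<exists>V. openin X V \<and> x \<in> V \<and>
        (\<forall>i\<in>I. \<forall>j\<in>I. V \<inter> U i \<noteq> {} \<and> V \<inter> U j \<noteq> {} \<longrightarrow> i = j))"

definition sfd_family :: "'a topology \<Rightarrow> 'i set \<Rightarrow> ('i \<Rightarrow> 'a set) \<Rightarrow> bool" where
  "sfd_family X I A \<longleftrightarrow>
     (\<exists>U. (\<forall>i\<in>I. functionally_open X (U i)) \<and> discrete_family X I U \<and>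
          (\<forall>i\<in>I. X closure_of (A i) \<subseteq> U i))"

definition sigma_sfd :: "'a topology \<Rightarrow> 'a set set \<Rightarrow> bool" where
  "sigma_sfd X \<B> \<longleftrightarrow> (\<exists>\<B>n :: nat \<Rightarrow> 'a set set. \<B> = (\<Union>n. \<B>n n) \<and> (\<forall>n. sfd_family X (\<B>n n) id))"

definition base_for :: "'a topology \<Rightarrow> 'b topology \<Rightarrow> 'a set set \<Rightarrow> ('a \<Rightarrow> 'b) \<Rightarrow> bool" where
  "base_for X Y \<B> f \<longleftrightarrow>
     (\<forall>V. openin Y V \<longrightarrow> (\<exists>\<C>\<subseteq>\<B>. \<Union>\<C> = {x \<in> topspace X. f x \<in> V}))"

definition Sigma_f_star_0 :: "'a topology \<Rightarrow> 'b topology \<Rightarrow> ('a \<Rightarrow> 'b) set" where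
  "Sigma_f_star_0 X Y = {f. f ` topspace X \<subseteq> topspace Y \<and>
     (\<exists>\<B>. sigma_sfd X \<B> \<and> (\<forall>B\<in>\<B>. functionally_closed X B) \<and> base_for X Y \<B> f)}"

definition Baire_one :: "'a topology \<Rightarrow> 'b topology \<Rightarrow> ('a \<Rightarrow> 'b) set" where
  "Baire_one X Y = {f. f ` topspace X \<subseteq> topspace Y \<and>
     (\<exists>fn :: nat \<Rightarrow> 'a \<Rightarrow> 'b. (\<forall>n. continuous_map X Y (fn n)) \<and>
        (\<forall>x\<in>topspace X. limitin Y (\<lambda>n. fn n x) (f x) sequentially))}"

end

theory Submission
  imports Defs
begin


primrec Grow :: "(nat \<Rightarrow> 'b \<Rightarrow> 'b \<Rightarrow> bool) \<Rightarrow> (nat \<Rightarrow> 'b \<Rightarrow> 'b \<Rightarrow> real \<Rightarrow> 'b) \<Rightarrow> nat \<Rightarrow> (real \<times> 'b) list \<Rightarrow> ('b \<Rightarrow> real \<Rightarrow> 'b) \<Rightarrow> 'b \<Rightarrow> real \<Rightarrow> 'b" where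
  "Grow cp P m [] K b l = b"
| "Grow cp P m (e # ps) K b l = (let s = (if cp m b (snd e) then l * fst e else 0) in
     if s \<le> 1/2 then Grow cp P m ps K b (max 0 (l - 2 * s))
     else if s \<le> 3/4 then P m b (snd e) (min 1 (max 0 (4 * s - 2)))
     else K (snd e) (min 1 (max 0 (4 * s - 3))))"

primrec Gfam :: "(nat \<Rightarrow> 'b \<Rightarrow> 'b \<Rightarrow> bool) \<Rightarrow> (nat \<Rightarrow> 'b \<Rightarrow> 'b \<Rightarrow> real \<Rightarrow> 'b) \<Rightarrow> nat \<Rightarrow> (real \<times> 'b) list list \<Rightarrow> 'b \<Rightarrow> real \<Rightarrow> 'b" where
  "Gfam cp P m [] b l = b"
| "Gfam cp P m (r # rs) b l = Grow cp P m r (Gfam cp P (Suc m) rs) b l"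

lemma Grow_zero: "Grow cp P m r K b 0 = b"
  by (induction r) (auto simp: Let_def)

lemma Gfam_zero: "Gfam cp P m rs b 0 = b"
  by (cases rs) (auto simp: Grow_zero)

lemma Grow_cong:
  assumes "list_all2 (\<lambda>e e'. fst e = fst e' \<and> (fst e \<noteq> 0 \<longrightarrow> snd e = snd e')) r1 r2"
  shows "Grow cp P m r1 K b l = Grow cp P m r2 K b l"
  using assms
proof (induction r1 arbitrary: r2 l)
  case Nil then show ?case by simp
next
  case (Cons e r1)
  then obtain e' r2' where r2: "r2 = e' # r2'" and ee: "fst e = fst e' \<and> (fst e \<noteq> 0 \<longrightarrow> snd e = snd e')"
    and rr: "list_all2 (\<lambda>e e'. fst e = fst e' \<and> (fst e \<noteq> 0 \<longrightarrow> snd e = snd e')) r1 r2'"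
    by (auto simp: list_all2_Cons1)
  show ?case
  proof (cases "fst e = 0")
    case True
    then show ?thesis using ee Cons.IH[OF rr] by (simp add: r2 Let_def)
  next
    case False
    then show ?thesis using ee Cons.IH[OF rr] by (simp add: r2 Let_def)
  qed
qed

lemma Gfam_cong:
  assumes "list_all2 (list_all2 (\<lambda>e e'. fst e = fst e' \<and> (fst e \<noteq> 0 \<longrightarrow> snd e = snd e'))) r1 r2"
  shows "Gfam cp P m r1 b l = Gfam cp P m r2 b l"
  using assms
proof (induction r1 arbitrary: r2 m b l)
  case Nil then show ?case by simp
next
  case (Cons r r1)
  then obtain r' r2' where r2: "r2 = r' # r2'" and rr: "list_all2 (\<lambda>e e'. fst e = fst e' \<and> (fst e \<noteq> 0 \<longrightarrow> snd e = snd e')) r r'"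
    and rs: "list_all2 (list_all2 (\<lambda>e e'. fst e = fst e' \<and> (fst e \<noteq> 0 \<longrightarrow> snd e = snd e'))) r1 r2'"
    by (auto simp: list_all2_Cons1)
  have "Gfam cp P (Suc m) r1 = Gfam cp P (Suc m) r2'"
    using Cons.IH[OF rs] by (intro ext) auto
  then show ?case using Grow_cong[OF rr] by (simp add: r2)
qed

lemma Grow_bound:
  assumes H1: "S m b \<Longrightarrow> b \<in> R"
    and H3: "\<And>y t. S m b \<Longrightarrow> cp m b y \<Longrightarrow> y \<in> A \<Longrightarrow> 0 \<le> t \<Longrightarrow> t \<le> 1 \<Longrightarrow> P m b y t \<in> R"
    and HK: "\<And>y t. S m b \<Longrightarrow> cp m b y \<Longrightarrow> y \<in> A \<Longrightarrow> K y t \<in> R"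
    and ys: "\<forall>e\<in>set rw. snd e \<in> A"
    and S: "S m b"
  shows "Grow cp P m rw K b l \<in> R"
  using ys
proof (induction rw arbitrary: l)
  case Nil then show ?case using H1 S by simp
next
  case (Cons e rw)
  then show ?case using H3[OF S] HK[OF S] by (auto simp: Let_def)
qed

lemma Gfam_bound:
  assumes H1: "\<And>m b. S m b \<Longrightarrow> b \<in> R"
    and H2: "\<And>m b y. S m b \<Longrightarrow> cp m b y \<Longrightarrow> y \<in> A \<Longrightarrow> S (Suc m) y"
    and H3: "\<And>m b y t. S m b \<Longrightarrow> cp m b y \<Longrightarrow> y \<in> A \<Longrightarrow> 0 \<le> t \<Longrightarrow> t \<le> 1 \<Longrightarrow> P m b y t \<in> R"
    and ys: "\<forall>r\<in>set rs. \<forall>e\<in>set r. snd e \<in> A"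
    and S: "S m b"
  shows "Gfam cp P m rs b l \<in> R"
  using ys S
proof (induction rs arbitrary: m b l)
  case Nil then show ?case using H1 by simp
next
  case (Cons r rs)
  show ?case
    unfolding Gfam.simps
  proof (rule Grow_bound[where S=S and A=A])
    show "S m b \<Longrightarrow> b \<in> R" using H1 .
  qed (use Cons H2 H3 in auto)
qed

lemma Grow_win:
  assumes "j < length rw" "rw ! j = (1, y)" "cp m b y" "\<forall>i<j. fst (rw ! i) = 0"
  shows "Grow cp P m rw K b 1 = K y 1"
  using assms
proof (induction rw arbitrary: j)
  case Nil then show ?case by simp
next
  case (Cons e rw)
  show ?case
  proof (cases j)
    case 0
    then show ?thesis using Cons.prems by (simp add: Let_def)
  next
    case (Suc j')
    have e0: "fst e = 0" using Cons.prems(4) Suc by (metis nth_Cons_0 zero_less_Suc)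
    have "Grow cp P m rw K b 1 = K y 1"
      using Cons.prems Suc by (intro Cons.IH[of j']) auto
    then show ?thesis using e0 by (simp add: Let_def)
  qed
qed

lemma cont_clamp01:
  assumes "continuous_map Z euclideanreal g"
  shows "continuous_map Z (top_of_set {0..1}) (\<lambda>z. min 1 (max 0 (g z)))"
  using assms by (auto intro!: continuous_map_into_subtopology continuous_intros)

lemma Grow_cont:
  assumes P: "\<And>b y. b \<in> topspace Y \<Longrightarrow> y \<in> topspace Y \<Longrightarrow> cp m b y \<Longrightarrow> pathin Y (P m b y) \<and> P m b y 0 = b \<and> P m b y 1 = y"
  and K: "\<And>y L. y \<in> topspace Y \<Longrightarrow> continuous_map Z euclideanreal L \<Longrightarrow> (\<forall>z\<in>topspace Z. 0 \<le> L z \<and> L z \<le> 1) \<Longrightarrow> continuous_map Z Y (\<lambda>z. K z y (L z))"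
  and K0: "\<And>z y. K z y 0 = y"
  and row: "\<forall>e\<in>set rw. continuous_map Z euclideanreal (fst e) \<and> (\<forall>z\<in>topspace Z. 0 \<le> fst e z \<and> fst e z \<le> 1) \<and> snd e \<in> topspace Y"
  and L: "continuous_map Z euclideanreal L" "\<forall>z\<in>topspace Z. 0 \<le> L z \<and> L z \<le> 1" and b: "b \<in> topspace Y"
  shows "continuous_map Z Y (\<lambda>z. Grow cp P m (map (\<lambda>e. (fst e z, snd e)) rw) (K z) b (L z))"
  using row L
proof (induction rw arbitrary: L)
  case Nil then show ?case using b by simp
next
  case (Cons e rw)
  obtain T y where e: "e = (T, y)" by fastforce
  have T: "continuous_map Z euclideanreal T" "\<forall>z\<in>topspace Z. 0 \<le> T z \<and> T z \<le> 1" and y: "y \<in> topspace Y"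
    using Cons.prems e by auto
  have rw: "\<forall>e\<in>set rw. continuous_map Z euclideanreal (fst e) \<and> (\<forall>z\<in>topspace Z. 0 \<le> fst e z \<and> fst e z \<le> 1) \<and> snd e \<in> topspace Y"
    using Cons.prems by auto
  show ?case
  proof (cases "cp m b y")
    case False
    have "continuous_map Z Y (\<lambda>z. Grow cp P m (map (\<lambda>e. (fst e z, snd e)) rw) (K z) b (L z))"
      using Cons.IH[OF rw Cons.prems(2,3)] .
    then show ?thesis
      by (rule continuous_map_eq) (use False Cons.prems(3) e in \<open>auto simp: Let_def max_def\<close>)
  next
    case True
    define s where "s z = L z * T z" for z
    have sc: "continuous_map Z euclideanreal s" unfolding s_def using Cons.prems(2) T(1) by (intro continuous_intros)
    have s01: "0 \<le> s z \<and> s z \<le> 1" if "z \<in> topspace Z" for z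
      using Cons.prems(3) T(2) that unfolding s_def by (simp add: mult_le_one)
    have A: "continuous_map Z Y (\<lambda>z. Grow cp P m (map (\<lambda>e. (fst e z, snd e)) rw) (K z) b (max 0 (L z - 2 * s z)))"
    proof (rule Cons.IH[OF rw])
      show "continuous_map Z euclideanreal (\<lambda>z. max 0 (L z - 2 * s z))"
        using sc Cons.prems(2) by (intro continuous_intros)
      show "\<forall>z\<in>topspace Z. 0 \<le> max 0 (L z - 2 * s z) \<and> max 0 (L z - 2 * s z) \<le> 1"
        using Cons.prems(3) s01 by (smt (verit))
    qed
    have Pp: "continuous_map Z Y (\<lambda>z. P m b y (min 1 (max 0 (4 * s z - 2))))"
    proof -
      have c4: "continuous_map Z euclideanreal (\<lambda>z. 4 * s z - 2)" using sc by (intro continuous_intros)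
      show ?thesis
        using continuous_map_compose[OF cont_clamp01[OF c4], of Y "P m b y"] P[OF b y True]
        by (simp add: pathin_def o_def)
    qed
    have Kk: "continuous_map Z Y (\<lambda>z. K z y (min 1 (max 0 (4 * s z - 3))))"
      by (rule K[OF y]) (use sc in \<open>auto intro!: continuous_intros\<close>)
    have inner: "continuous_map Z Y (\<lambda>z. if s z \<le> 3/4 then P m b y (min 1 (max 0 (4 * s z - 2))) else K z y (min 1 (max 0 (4 * s z - 3))))"
      by (rule continuous_map_cases_le[OF sc continuous_map_const[THEN iffD2]])
         (use Pp Kk P[OF b y True] K0 in \<open>auto intro: continuous_map_from_subtopology\<close>)
    have outer: "continuous_map Z Y (\<lambda>z. if s z \<le> 1/2 then Grow cp P m (map (\<lambda>e. (fst e z, snd e)) rw) (K z) b (max 0 (L z - 2 * s z)) else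
         (if s z \<le> 3/4 then P m b y (min 1 (max 0 (4 * s z - 2))) else K z y (min 1 (max 0 (4 * s z - 3)))))"
    proof (rule continuous_map_cases_le[OF sc continuous_map_const[THEN iffD2]])
      show "continuous_map (subtopology Z {x \<in> topspace Z. s x \<le> 1/2}) Y (\<lambda>z. Grow cp P m (map (\<lambda>e. (fst e z, snd e)) rw) (K z) b (max 0 (L z - 2 * s z)))"
        using A by (rule continuous_map_from_subtopology)
      show "continuous_map (subtopology Z {x \<in> topspace Z. 1/2 \<le> s x}) Y (\<lambda>z. if s z \<le> 3/4 then P m b y (min 1 (max 0 (4 * s z - 2))) else K z y (min 1 (max 0 (4 * s z - 3))))"
        using inner by (rule continuous_map_from_subtopology)
      fix z assume z: "z \<in> topspace Z" "s z = 1/2"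
      have "max 0 (L z - 2 * s z) = 0" using z Cons.prems(3) by auto
      then show "Grow cp P m (map (\<lambda>e. (fst e z, snd e)) rw) (K z) b (max 0 (L z - 2 * s z)) =
          (if s z \<le> 3/4 then P m b y (min 1 (max 0 (4 * s z - 2))) else K z y (min 1 (max 0 (4 * s z - 3))))"
        using z P[OF b y True] by (simp add: Grow_zero)
    qed auto
    moreover have "(\<lambda>z. Grow cp P m (map (\<lambda>e. (fst e z, snd e)) (e # rw)) (K z) b (L z)) = (\<lambda>z. if s z \<le> 1/2 then Grow cp P m (map (\<lambda>e. (fst e z, snd e)) rw) (K z) b (max 0 (L z - 2 * s z)) else
         (if s z \<le> 3/4 then P m b y (min 1 (max 0 (4 * s z - 2))) else K z y (min 1 (max 0 (4 * s z - 3)))))"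
      using True by (intro ext) (simp only: e s_def Let_def list.map Grow.simps fst_conv snd_conv if_True)
    ultimately show ?thesis by simp
  qed
qed

lemma Gfam_cont:
  assumes P: "\<And>m b y. b \<in> topspace Y \<Longrightarrow> y \<in> topspace Y \<Longrightarrow> cp m b y \<Longrightarrow> pathin Y (P m b y) \<and> P m b y 0 = b \<and> P m b y 1 = y"
  and rows: "\<forall>rw\<in>set rs. \<forall>e\<in>set rw. continuous_map Z euclideanreal (fst e) \<and> (\<forall>z\<in>topspace Z. 0 \<le> fst e z \<and> fst e z \<le> 1) \<and> snd e \<in> topspace Y"
  and L: "continuous_map Z euclideanreal L" "\<forall>z\<in>topspace Z. 0 \<le> L z \<and> L z \<le> 1" and b: "b \<in> topspace Y"
  shows "continuous_map Z Y (\<lambda>z. Gfam cp P m (map (map (\<lambda>e. (fst e z, snd e))) rs) b (L z))"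
  using rows L b
proof (induction rs arbitrary: m b L)
  case Nil then show ?case by simp
next
  case (Cons rw rs)
  show ?case
    unfolding list.map Gfam.simps
  proof (rule Grow_cont[where Y=Y])
    show "\<And>y L. y \<in> topspace Y \<Longrightarrow> continuous_map Z euclideanreal L \<Longrightarrow> \<forall>z\<in>topspace Z. 0 \<le> L z \<and> L z \<le> 1 \<Longrightarrow>
      continuous_map Z Y (\<lambda>z. Gfam cp P (Suc m) (map (map (\<lambda>e. (fst e z, snd e))) rs) y (L z))"
      using Cons.IH Cons.prems(1) by auto
  qed (use Cons.prems P in \<open>auto simp: Gfam_zero\<close>)
qed

lemma arc_imp_path:
  assumes A: "arc_connectedin Y S" shows "path_connectedin Y S"
proof -
  have S: "S \<subseteq> topspace Y" and H: "\<And>x y. x\<in>S \<Longrightarrow> y\<in>S \<Longrightarrow> x \<noteq> y \<Longrightarrow> (\<exists>g. embedding_map (top_of_set {0..1::real}) (subtopology Y S) g \<and> g 0 = x \<and> g 1 = y)"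
    using A unfolding arc_connectedin_def by auto
  have "\<exists>g. pathin Y g \<and> g \<in> {0..1} \<rightarrow> S \<and> g 0 = x \<and> g 1 = y" if xy: "x \<in> S" "y \<in> S" for x y
  proof (cases "x = y")
    case True
    then show ?thesis using xy S by (intro exI[of _ "\<lambda>_. x"]) auto
  next
    case False
    then obtain g where g: "embedding_map (top_of_set {0..1::real}) (subtopology Y S) g" "g 0 = x" "g 1 = y"
      using H xy by blast
    have "continuous_map (top_of_set {0..1}) (subtopology Y S) g"
      using g(1) unfolding embedding_map_def
      by (meson continuous_map_in_subtopology homeomorphic_imp_continuous_map)
    then have "pathin (subtopology Y S) g" by (simp add: pathin_def)
    then show ?thesis using g by (auto simp: pathin_subtopology)
  qed
  then show ?thesis using S unfolding path_connectedin by blast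
qed

lemma lac_imp_lpc: "locally_arc_connected_space Y \<Longrightarrow> locally_path_connected_space Y"
  unfolding locally_arc_connected_space_def locally_path_connected_space_def
  by (erule neighbourhood_base_of_mono) (rule arc_imp_path)


lemma continuous_map_local:
  assumes "\<And>x. x \<in> topspace X \<Longrightarrow> \<exists>V. openin X V \<and> x \<in> V \<and> continuous_map (subtopology X V) Y f"
  shows "continuous_map X Y f"
  unfolding continuous_map_def
proof (intro conjI allI impI)
  show "f \<in> topspace X \<rightarrow> topspace Y"
  proof
    fix x assume x: "x \<in> topspace X"
    then obtain V where V: "openin X V" "x \<in> V" "continuous_map (subtopology X V) Y f" using assms by blast
    have "x \<in> topspace (subtopology X V)" using x V(2) by simp
    then show "f x \<in> topspace Y" using continuous_map_image_subset_topspace[OF V(3)] by (meson image_subset_iff)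
  qed
  fix U assume U: "openin Y U"
  show "openin X {x \<in> topspace X. f x \<in> U}"
  proof (rule openin_subopen[THEN iffD2], rule ballI)
    fix x assume x: "x \<in> {x \<in> topspace X. f x \<in> U}"
    then obtain V where V: "openin X V" "x \<in> V" "continuous_map (subtopology X V) Y f" using assms by blast
    have "openin (subtopology X V) {z \<in> topspace (subtopology X V). f z \<in> U}"
      using U V(3) unfolding continuous_map_def by (elim conjE) (erule allE, erule mp)
    then have o: "openin X {z \<in> topspace (subtopology X V). f z \<in> U}"
      using V(1) by (rule openin_trans_full)
    have "x \<in> {z \<in> topspace (subtopology X V). f z \<in> U}" using x V(2) by simp
    moreover have "{z \<in> topspace (subtopology X V). f z \<in> U} \<subseteq> {x \<in> topspace X. f x \<in> U}" by auto
    ultimately show "\<exists>T. openin X T \<and> x \<in> T \<and> T \<subseteq> {x \<in> topspace X. f x \<in> U}"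
      using o by (intro exI[of _ "{z \<in> topspace (subtopology X V). f z \<in> U}"]) simp
  qed
qed

lemma list_all2_map_same: "(\<And>x. x \<in> set xs \<Longrightarrow> R (F x) (G x)) \<Longrightarrow> list_all2 R (map F xs) (map G xs)"
  by (induction xs) auto

lemma ex_pow2_small: "(e::real) > 0 \<Longrightarrow> \<exists>n. 1/2^n < e"
proof -
  assume e: "e > 0"
  have "(1/2::real) < 1" by simp
  from real_arch_pow_inv[OF e this] obtain n where "(1/2::real)^n < e" by (elim exE)
  then have "1/2^n < e" by (simp only: power_one_over)
  then show ?thesis by (rule exI)
qed

lemma pow2_mono: "m \<le> n \<Longrightarrow> (1::real)/2^n \<le> 1/2^m"
proof -
  assume "m \<le> n"
  then have "(2::real)^m \<le> 2^n" by (rule power_increasing) simp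
  then show ?thesis by (intro divide_left_mono) auto
qed

lemma pow2_Suc: "(1::real)/2^(Suc m) = (1/2^m)/2"
  by (simp only: power_Suc) (simp add: field_simps)



theorem main6:
  fixes X :: "'a topology" and Y :: "'b topology"
  assumes mY: "metrizable_space Y" and cY: "connected_space Y" and lY: "locally_arc_connected_space Y"
  shows "Sigma_f_star_0 X Y \<subseteq> Baire_one X Y"
proof
  fix f assume "f \<in> Sigma_f_star_0 X Y"
  then obtain \<B> where fX: "f ` topspace X \<subseteq> topspace Y" and sig: "sigma_sfd X \<B>"
     and fc: "\<forall>B\<in>\<B>. functionally_closed X B" and base: "base_for X Y \<B> f"
    unfolding Sigma_f_star_0_def by blast
  show "f \<in> Baire_one X Y"
  proof (cases "topspace X = {}")
    case True
    have "continuous_map X Y f" using True by (simp add: continuous_map_def)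
    then show ?thesis using fX True unfolding Baire_one_def by (intro CollectI conjI exI[of _ "\<lambda>n. f"]) auto
  next
    case False
    then obtain x0 where x0: "x0 \<in> topspace X" by blast
    define y0 where "y0 = f x0"
    have y0: "y0 \<in> topspace Y" using fX x0 y0_def by blast
    have lpc: "locally_path_connected_space Y" using lY by (rule lac_imp_lpc)
    have pcY: "path_connected_space Y" using path_connected_eq_connected_space[OF lpc] cY by simp
    obtain Msp d where ms: "Metric_space Msp d" and Yeq: "Y = Metric_space.mtopology Msp d"
      using mY unfolding metrizable_space_def by blast
    interpret Metric_space Msp d by (rule ms)
    have tY: "topspace Y = Msp" by (simp add: Yeq)
    from sig have exB: "\<exists>Bn::nat \<Rightarrow> 'a set set. \<B> = (\<Union>n. Bn n) \<and> (\<forall>n. sfd_family X (Bn n) id)"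
      unfolding sigma_sfd_def .
    define Bn where "Bn = (SOME Bn::nat \<Rightarrow> 'a set set. \<B> = (\<Union>n. Bn n) \<and> (\<forall>n. sfd_family X (Bn n) id))"
    have BnP: "\<B> = (\<Union>n. Bn n) \<and> (\<forall>n. sfd_family X (Bn n) id)"
      unfolding Bn_def by (rule someI_ex[OF exB])
    have Bn: "\<B> = (\<Union>n. Bn n)" and sfd0: "\<forall>n. sfd_family X (Bn n) id"
      using BnP by (rule conjunct1, rule conjunct2)
    have sfd: "\<And>n. sfd_family X (Bn n) id" using sfd0 by (rule spec)
    have exU: "\<exists>U. (\<forall>B\<in>Bn n. functionally_open X (U B)) \<and> discrete_family X (Bn n) U \<and> (\<forall>B\<in>Bn n. X closure_of B \<subseteq> U B)" for n
      using sfd[of n] unfolding sfd_family_def id_def .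
    define U where "U n = (SOME U. (\<forall>B\<in>Bn n. functionally_open X (U B)) \<and> discrete_family X (Bn n) U \<and> (\<forall>B\<in>Bn n. X closure_of B \<subseteq> U B))" for n
    have UU: "(\<forall>B\<in>Bn n. functionally_open X (U n B)) \<and> discrete_family X (Bn n) (U n) \<and> (\<forall>B\<in>Bn n. X closure_of B \<subseteq> U n B)" for n
      unfolding U_def by (rule someI_ex[OF exU])
    have Uo: "functionally_open X (U n B)" if "B \<in> Bn n" for n B
      using UU[of n] that by blast
    have Ud: "discrete_family X (Bn n) (U n)" for n
      using UU[of n] by blast
    have Uc: "X closure_of B \<subseteq> U n B" if "B \<in> Bn n" for n B
      using UU[of n] that by blast
    have BnB: "\<And>n B. B \<in> Bn n \<Longrightarrow> B \<in> \<B>" unfolding Bn by (rule UN_I[OF UNIV_I])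
    have fcB: "\<And>n B. B \<in> Bn n \<Longrightarrow> functionally_closed X B" using fc BnB by (rule bspec)
    define gB where "gB B = (SOME g. continuous_map X (top_of_set {0..1::real}) g \<and> B = {x \<in> topspace X. g x = 0})" for B
    have gB: "continuous_map X (top_of_set {0..1::real}) (gB B) \<and> B = {x \<in> topspace X. gB B x = 0}" if "B \<in> \<B>" for B
    proof -
      have "\<exists>g. continuous_map X (top_of_set {0..1::real}) g \<and> B = {x \<in> topspace X. g x = 0}"
        using bspec[OF fc that] unfolding functionally_closed_def .
      then show ?thesis unfolding gB_def by (rule someI_ex)
    qed
    define hU where "hU n B = (SOME h. continuous_map X (top_of_set {0..1::real}) h \<and> topspace X - U n B = {x \<in> topspace X. h x = 0})" for n B
    have hU: "continuous_map X (top_of_set {0..1::real}) (hU n B) \<and> topspace X - U n B = {x \<in> topspace X. hU n B x = 0}" if "B \<in> Bn n" for n B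
    proof -
      have "\<exists>h. continuous_map X (top_of_set {0..1::real}) h \<and> topspace X - U n B = {x \<in> topspace X. h x = 0}"
        using Uo[OF that] unfolding functionally_open_def functionally_closed_def by (rule conjunct2)
      then show ?thesis unfolding hU_def by (rule someI_ex)
    qed
    have UX: "U n B \<subseteq> topspace X" if "B \<in> Bn n" for n B
      using Uo[OF that] unfolding functionally_open_def by (rule conjunct1)
    have BX: "B \<subseteq> topspace X" if "B \<in> Bn n" for n B
    proof -
      have "\<exists>g. continuous_map X (top_of_set {0..1::real}) g \<and> B = {x \<in> topspace X. g x = 0}"
        using fcB[OF that] unfolding functionally_closed_def .
      then obtain g :: "'a \<Rightarrow> real" where "B = {x \<in> topspace X. g x = 0}" by (elim exE conjE) (rule that)
      then show ?thesis by (simp add: Collect_subset)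
    qed
    have BU: "B \<subseteq> U n B" if "B \<in> Bn n" for n B
      using closure_of_subset[OF BX[OF that]] Uc[OF that] by (rule subset_trans)
    have gBt: "continuous_map X (top_of_set {0..1::real}) (gB B)" if "B \<in> Bn n" for n B
      using gB[OF BnB[OF that]] by (rule conjunct1)
    have gBe: "B = {x \<in> topspace X. gB B x = 0}" if "B \<in> Bn n" for n B
      using gB[OF BnB[OF that]] by (rule conjunct2)
    have hUt: "continuous_map X (top_of_set {0..1::real}) (hU n B)" if "B \<in> Bn n" for n B
      using hU[OF that] by (rule conjunct1)
    have hUe: "topspace X - U n B = {x \<in> topspace X. hU n B x = 0}" if "B \<in> Bn n" for n B
      using hU[OF that] by (rule conjunct2)
    have gBc: "continuous_map X euclideanreal (gB B)" if "B \<in> Bn n" for n B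
      using gBt[OF that] by (rule continuous_map_into_fulltopology)
    have hUc: "continuous_map X euclideanreal (hU n B)" if "B \<in> Bn n" for n B
      using hUt[OF that] by (rule continuous_map_into_fulltopology)
    have gB01: "0 \<le> gB B x \<and> gB B x \<le> 1" if "B \<in> Bn n" "x \<in> topspace X" for n B x
    proof -
      have "gB B x \<in> topspace (top_of_set {0..1::real})"
        using continuous_map_image_subset_topspace[OF gBt[OF that(1)]] that(2) by (meson image_subset_iff)
      then show ?thesis by simp
    qed
    have hU01: "0 \<le> hU n B x \<and> hU n B x \<le> 1" if "B \<in> Bn n" "x \<in> topspace X" for n B x
    proof -
      have "hU n B x \<in> topspace (top_of_set {0..1::real})"
        using continuous_map_image_subset_topspace[OF hUt[OF that(1)]] that(2) by (meson image_subset_iff)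
      then show ?thesis by simp
    qed
    have gB0: "gB B x = 0 \<longleftrightarrow> x \<in> B" if "B \<in> Bn n" "x \<in> topspace X" for n B x
    proof -
      have "(x \<in> B) = (x \<in> {x \<in> topspace X. gB B x = 0})"
        using gBe[OF that(1)] by (rule arg_cong)
      then show ?thesis using that(2) by simp
    qed
    have hU0: "hU n B x = 0 \<longleftrightarrow> x \<notin> U n B" if "B \<in> Bn n" "x \<in> topspace X" for n B x
    proof -
      have "(x \<in> topspace X - U n B) = (x \<in> {x \<in> topspace X. hU n B x = 0})"
        using hUe[OF that(1)] by (rule arg_cong)
      then show ?thesis using that(2) by simp
    qed
    have den: "gB B x + hU n B x > 0" if "B \<in> Bn n" "x \<in> topspace X" for n B x
    proof (cases "x \<in> B")
      case True
      then have "hU n B x \<noteq> 0" using BU[OF that(1)] hU0[OF that] by blast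
      then show ?thesis using gB01[OF that] hU01[OF that] by linarith
    next
      case False
      then have "gB B x \<noteq> 0" using gB0[OF that] by blast
      then show ?thesis using gB01[OF that] hU01[OF that] by linarith
    qed
    define \<phi> where "\<phi> n B x = hU n B x / (gB B x + hU n B x)" for n B x
    have \<phi>c: "continuous_map X euclideanreal (\<phi> n B)" if "B \<in> Bn n" for n B
    proof -
      have "\<And>x. x \<in> topspace X \<Longrightarrow> gB B x + hU n B x \<noteq> 0" using den[OF that] by (metis less_irrefl)
      then show ?thesis unfolding \<phi>_def
        by (intro continuous_map_real_divide continuous_map_add gBc[OF that] hUc[OF that]) auto
    qed
    have \<phi>01: "0 \<le> \<phi> n B x \<and> \<phi> n B x \<le> 1" if "B \<in> Bn n" "x \<in> topspace X" for n B x
      unfolding \<phi>_def using den[OF that] gB01[OF that] hU01[OF that] by (auto simp: divide_simps)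
    have \<phi>1: "\<phi> n B x = 1" if "B \<in> Bn n" "x \<in> B" for n B x
    proof -
      have xt: "x \<in> topspace X" using that BX by blast
      show ?thesis unfolding \<phi>_def using gB0[OF that(1) xt] that(2) den[OF that(1) xt] by simp
    qed
    have \<phi>lt: "\<phi> n B x < 1" if "B \<in> Bn n" "x \<in> topspace X" "x \<notin> B" for n B x
    proof -
      have "gB B x > 0" using gB0[OF that(1,2)] that(3) gB01[OF that(1,2)] by linarith
      then show ?thesis unfolding \<phi>_def using den[OF that(1,2)] hU01[OF that(1,2)] by (simp add: divide_simps)
    qed
    have \<phi>0: "\<phi> n B x = 0" if "B \<in> Bn n" "x \<in> topspace X" "x \<notin> U n B" for n B x
      unfolding \<phi>_def using hU0[OF that(1,2)] that(3) by simp

    define \<psi> where "\<psi> k v = max 0 (1 - (real k + 1) * (1 - v))" for k :: nat and v :: real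
    have \<psi>1: "\<psi> k 1 = 1" for k by (simp add: \<psi>_def)
    have \<psi>0: "\<psi> k 0 = 0" for k by (simp add: \<psi>_def)
    have \<psi>01: "0 \<le> \<psi> k v \<and> \<psi> k v \<le> 1" if "0 \<le> v" "v \<le> 1" for k v
      using that by (auto simp: \<psi>_def)
    have \<psi>c: "continuous_map Z euclideanreal (\<lambda>z. \<psi> k (g z))" if "continuous_map Z euclideanreal g" for Z :: "'a topology" and g k
      unfolding \<psi>_def using that by (intro continuous_intros)

    define yB where "yB B = (if B \<noteq> {} \<and> B \<subseteq> topspace X then f (SOME x. x \<in> B) else y0)" for B
    define fin where "fin m B = (\<forall>z\<in>B. d (f z) (yB B) < 1/2^m)" for m :: nat and B
    define ex where "ex n x \<longleftrightarrow> (\<exists>B\<in>Bn n. x \<in> U n B)" for n x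
    define sel where "sel n x = (SOME B. B \<in> Bn n \<and> x \<in> U n B)" for n x
    define tv where "tv k m n x = (if ex n x \<and> fin m (sel n x) then \<psi> k (\<phi> n (sel n x) x) else 0)" for k m n x
    define rows where "rows k x = map (\<lambda>m. map (\<lambda>n. (tv k m n x, yB (sel n x))) [0..<Suc k]) [0..<Suc k]" for k x
    define cp where "cp m b y \<longleftrightarrow> m = 0 \<or> d b y < 4/2^m" for m :: nat and b y
    define Pspec where "Pspec m b y g \<longleftrightarrow> pathin Y g \<and> g 0 = b \<and> g 1 = y \<and>
       (\<forall>n\<le>m. (\<exists>g'. pathin Y g' \<and> g' 0 = b \<and> g' 1 = y \<and> (\<forall>t\<in>{0..1}. d b (g' t) < 1/2^n)) \<longrightarrow> (\<forall>t\<in>{0..1}. d b (g t) < 1/2^n))"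
      for m :: nat and b y and g :: "real \<Rightarrow> 'b"
    define P where "P m b y = (SOME g. Pspec m b y g)" for m b y
    define fk where "fk k x = Gfam cp P 0 (rows k x) y0 1" for k x

    have yBin: "yB B \<in> Msp" for B
    proof (cases "B \<noteq> {} \<and> B \<subseteq> topspace X")
      case True
      then have "(SOME x. x \<in> B) \<in> B" by (simp add: some_in_eq)
      then have "(SOME x. x \<in> B) \<in> topspace X" using True by blast
      then show ?thesis using True fX tY by (auto simp: yB_def)
    qed (use y0 tY in \<open>auto simp: yB_def\<close>)
    have Pok: "Pspec m b y (P m b y)" if bY: "b \<in> Msp" "y \<in> Msp" for m b y
    proof -
      define Q where "Q n g \<longleftrightarrow> pathin Y g \<and> g 0 = b \<and> g 1 = y \<and> (\<forall>t\<in>{0..1}. d b (g t) < 1/2^n)" for n :: nat and g :: "real \<Rightarrow> 'b"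
      define N where "N = {n. n \<le> m \<and> (\<exists>g. Q n g)}"
      have "\<exists>g. Pspec m b y g"
      proof (cases "N = {}")
        case True
        obtain g where g: "pathin Y g" "g 0 = b" "g 1 = y"
          using pcY by(simp only: path_connected_space_def tY) (use bY in blast)
        have "Pspec m b y g"
          unfolding Pspec_def using g True by (auto simp: N_def Q_def)
        then show ?thesis by blast
      next
        case False
        have fin: "finite N" unfolding N_def by (rule finite_subset[of _ "{..m}"]) auto
        define n0 where "n0 = Max N"
        have n0N: "n0 \<in> N" unfolding n0_def using fin False by (rule Max_in)
        then obtain g where g: "Q n0 g" unfolding N_def by blast
        have "Pspec m b y g"
          unfolding Pspec_def
        proof (intro conjI allI impI ballI)
          show "pathin Y g" "g 0 = b" "g 1 = y" using g by (auto simp: Q_def)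
          fix n t assume n: "n \<le> m" and ex: "\<exists>g'. pathin Y g' \<and> g' 0 = b \<and> g' 1 = y \<and> (\<forall>t\<in>{0..1}. d b (g' t) < 1/2^n)"
            and t: "t \<in> {0..(1::real)}"
          have "n \<in> N" using n ex by (auto simp: N_def Q_def)
          then have "n \<le> n0" unfolding n0_def using fin by (simp add: Max_ge)
          then have "(1::real)/2^n0 \<le> 1/2^n" by (simp add: frac_le)
          moreover have "d b (g t) < 1/2^n0" using g t by (auto simp: Q_def)
          ultimately show "d b (g t) < 1/2^n" by linarith
        qed
        then show ?thesis by blast
      qed
      then show ?thesis unfolding P_def by (rule someI_ex)
    qed
    have selU: "sel n x \<in> Bn n \<and> x \<in> U n (sel n x)" if "ex n x" for n x
      unfolding sel_def by (rule someI_ex) (use that in \<open>auto simp: ex_def\<close>)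
    have uniq: "B = B'" if "x \<in> topspace X" "B \<in> Bn n" "B' \<in> Bn n" "x \<in> U n B" "x \<in> U n B'" for n x B B'
      using Ud[of n] that unfolding discrete_family_def by blast

    have cont: "continuous_map X Y (fk k)" for k
    proof (rule continuous_map_local)
      fix x assume x: "x \<in> topspace X"
      define V where "V n = (SOME V. openin X V \<and> x \<in> V \<and> (\<forall>B\<in>Bn n. \<forall>B'\<in>Bn n. V \<inter> U n B \<noteq> {} \<and> V \<inter> U n B' \<noteq> {} \<longrightarrow> B = B'))" for n
      have VP: "openin X (V n) \<and> x \<in> V n \<and> (\<forall>B\<in>Bn n. \<forall>B'\<in>Bn n. V n \<inter> U n B \<noteq> {} \<and> V n \<inter> U n B' \<noteq> {} \<longrightarrow> B = B')" for n
      proof -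
        have "\<exists>V. openin X V \<and> x \<in> V \<and> (\<forall>B\<in>Bn n. \<forall>B'\<in>Bn n. V \<inter> U n B \<noteq> {} \<and> V \<inter> U n B' \<noteq> {} \<longrightarrow> B = B')"
          using Ud[of n] x unfolding discrete_family_def by blast
        then show ?thesis unfolding V_def by (rule someI_ex)
      qed
      define W where "W = (\<Inter>n\<in>{..k}. V n) \<inter> topspace X"
      have Wo: "openin X W" unfolding W_def by (rule openin_INT) (auto simp: VP)
      have xW: "x \<in> W" unfolding W_def using VP x by auto
      have WV: "W \<subseteq> V n" if "n \<le> k" for n unfolding W_def using that by auto
      have WX: "W \<subseteq> topspace X" unfolding W_def by auto
      define hasc where "hasc n \<longleftrightarrow> (\<exists>B\<in>Bn n. W \<inter> U n B \<noteq> {})" for n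
      define c where "c n = (SOME B. B \<in> Bn n \<and> W \<inter> U n B \<noteq> {})" for n
      have cP: "c n \<in> Bn n \<and> W \<inter> U n (c n) \<noteq> {}" if "hasc n" for n
        unfolding c_def by (rule someI_ex) (use that in \<open>auto simp: hasc_def\<close>)
      define TF where "TF m n z = (if hasc n \<and> fin m (c n) then \<psi> k (\<phi> n (c n) z) else 0)" for m n z
      define rowsF where "rowsF = map (\<lambda>m. map (\<lambda>n. (TF m n, yB (c n))) [0..<Suc k]) [0..<Suc k]"
      have keyeq: "tv k m n z = TF m n z \<and> (tv k m n z \<noteq> 0 \<longrightarrow> yB (sel n z) = yB (c n))"
        if n: "n \<le> k" and z: "z \<in> W" for m n z
      proof (cases "ex n z")
        case True
        have B: "sel n z \<in> Bn n" "z \<in> U n (sel n z)" using selU[OF True] by auto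
        have hc: "hasc n" unfolding hasc_def using B z by blast
        have C: "c n \<in> Bn n" "W \<inter> U n (c n) \<noteq> {}" using cP[OF hc] by auto
        have "V n \<inter> U n (sel n z) \<noteq> {}" using B z WV[OF n] by blast
        moreover have "V n \<inter> U n (c n) \<noteq> {}" using C WV[OF n] by blast
        ultimately have eq: "sel n z = c n" using VP[of n] B C by blast
        show ?thesis unfolding tv_def TF_def using True hc eq by simp
      next
        case False
        have tv0: "tv k m n z = 0" unfolding tv_def using False by simp
        have "TF m n z = 0"
        proof (cases "hasc n \<and> fin m (c n)")
          case True
          have C: "c n \<in> Bn n" using cP True by blast
          have "z \<notin> U n (c n)" using False C unfolding ex_def by blast
          then have "\<phi> n (c n) z = 0" using \<phi>0[OF C] z WX by blast
          then show ?thesis unfolding TF_def using True \<psi>0 by simp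
        qed (auto simp: TF_def)
        then show ?thesis using tv0 by simp
      qed
      have TFc: "continuous_map (subtopology X W) euclideanreal (TF m n)" for m n
      proof (cases "hasc n \<and> fin m (c n)")
        case True
        have C: "c n \<in> Bn n" using cP True by blast
        have "continuous_map X euclideanreal (\<lambda>z. \<psi> k (\<phi> n (c n) z))"
          by (rule \<psi>c[OF \<phi>c[OF C]])
        then show ?thesis unfolding TF_def using True by (simp add: continuous_map_from_subtopology)
      qed (auto simp: TF_def[abs_def])
      have TF01: "0 \<le> TF m n z \<and> TF m n z \<le> 1" if "z \<in> topspace (subtopology X W)" for m n z
      proof (cases "hasc n \<and> fin m (c n)")
        case True
        have C: "c n \<in> Bn n" using cP True by blast
        have "z \<in> topspace X" using that by simp
        then show ?thesis unfolding TF_def using True \<psi>01 \<phi>01[OF C] by simp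
      qed (auto simp: TF_def)
      have gc: "continuous_map (subtopology X W) Y (\<lambda>z. Gfam cp P 0 (map (map (\<lambda>e. (fst e z, snd e))) rowsF) y0 ((\<lambda>_. 1) z))"
      proof (rule Gfam_cont[where Y=Y])
        show "\<And>m b y. b \<in> topspace Y \<Longrightarrow> y \<in> topspace Y \<Longrightarrow> cp m b y \<Longrightarrow> pathin Y (P m b y) \<and> P m b y 0 = b \<and> P m b y 1 = y"
          using Pok tY unfolding Pspec_def by blast
        show "\<forall>rw\<in>set rowsF. \<forall>e\<in>set rw. continuous_map (subtopology X W) euclideanreal (fst e) \<and>
               (\<forall>z\<in>topspace (subtopology X W). 0 \<le> fst e z \<and> fst e z \<le> 1) \<and> snd e \<in> topspace Y"
          unfolding rowsF_def using TFc TF01 yBin tY by auto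
      qed (use y0 in auto)
      show "\<exists>V. openin X V \<and> x \<in> V \<and> continuous_map (subtopology X V) Y (fk k)"
      proof (intro exI conjI)
        show "openin X W" by (rule Wo)
        show "x \<in> W" by (rule xW)
        show "continuous_map (subtopology X W) Y (fk k)"
          using gc
        proof (rule continuous_map_eq)
          fix z assume "z \<in> topspace (subtopology X W)"
          then have z: "z \<in> W" by simp
          show "Gfam cp P 0 (map (map (\<lambda>e. (fst e z, snd e))) rowsF) y0 ((\<lambda>_. 1) z) = fk k z"
            unfolding fk_def
          proof (rule sym, rule Gfam_cong)
            show "list_all2 (list_all2 (\<lambda>e e'. fst e = fst e' \<and> (fst e \<noteq> 0 \<longrightarrow> snd e = snd e'))) (rows k z)
                    (map (map (\<lambda>e. (fst e z, snd e))) rowsF)"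
              unfolding rows_def rowsF_def map_map o_def
              by (intro list_all2_map_same) (use keyeq[OF _ z] in auto)
          qed
        qed
      qed
    qed
    have conv: "limitin Y (\<lambda>k. fk k x) (f x) sequentially" if x: "x \<in> topspace X" for x
    proof -
      have fx: "f x \<in> Msp" using fX x tY by blast
      have exw: "\<exists>n. \<exists>B\<in>Bn n. x \<in> B \<and> fin m B" for m
      proof -
        define Vm where "Vm = mball (f x) (1/2^(Suc m))"
        have "openin Y Vm" unfolding Vm_def Yeq by simp
        then have "\<exists>\<C>\<subseteq>\<B>. \<Union>\<C> = {z \<in> topspace X. f z \<in> Vm}"
          using base unfolding base_for_def by blast
        then obtain \<C> where C: "\<C> \<subseteq> \<B> \<and> \<Union>\<C> = {z \<in> topspace X. f z \<in> Vm}" ..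
        have C1: "\<C> \<subseteq> \<B>" using C by (rule conjunct1)
        have C2: "\<Union>\<C> = {z \<in> topspace X. f z \<in> Vm}" using C by (rule conjunct2)
        have "x \<in> {z \<in> topspace X. f z \<in> Vm}" unfolding Vm_def using x fx by simp
        then have "x \<in> \<Union>\<C>" by (simp only: C2)
        then obtain B where B: "B \<in> \<C>" "x \<in> B" by (rule UnionE)
        have "B \<in> \<B>" using C1 B(1) by (rule subsetD)
        then have "B \<in> (\<Union>n. Bn n)" by (simp only: Bn)
        then obtain n where n: "B \<in> Bn n" by (rule UN_E)
        have fB: "f z \<in> Vm" if "z \<in> B" for z
        proof -
          have "z \<in> \<Union>\<C>" using that B(1) by (rule UnionI[rotated])
          then have "z \<in> {z \<in> topspace X. f z \<in> Vm}" by (simp only: C2)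
          then show ?thesis by simp
        qed
        have ne: "B \<noteq> {} \<and> B \<subseteq> topspace X" using B(2) BX[OF n] by blast
        define z0 where "z0 = (SOME z. z \<in> B)"
        have z0: "z0 \<in> B" unfolding z0_def using B(2) by (rule someI)
        have yBB: "yB B = f z0" unfolding yB_def z0_def using ne by simp
        have "fin m B" unfolding fin_def
        proof
          fix z assume z: "z \<in> B"
          have a: "d (f x) (f z) < 1/2^(Suc m)" "f z \<in> Msp" using fB[OF z] unfolding Vm_def by auto
          have b: "d (f x) (f z0) < 1/2^(Suc m)" "f z0 \<in> Msp" using fB[OF z0] unfolding Vm_def by auto
          have "d (f z) (f z0) \<le> d (f z) (f x) + d (f x) (f z0)" using a b fx triangle by blast
          also have "\<dots> < 1/2^m" using a b commute[of "f z" "f x"] by (simp add: pow2_Suc)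
          finally show "d (f z) (yB B) < 1/2^m" using yBB by simp
        qed
        then show ?thesis using n B(2) by blast
      qed
      define nw where "nw m = (LEAST n. \<exists>B\<in>Bn n. x \<in> B \<and> fin m B)" for m
      define Bw where "Bw m = (SOME B. B \<in> Bn (nw m) \<and> x \<in> B \<and> fin m B)" for m
      have nwP: "\<exists>B\<in>Bn (nw m). x \<in> B \<and> fin m B" for m
        unfolding nw_def by (rule LeastI_ex) (rule exw)
      have Bw: "Bw m \<in> Bn (nw m) \<and> x \<in> Bw m \<and> fin m (Bw m)" for m
        unfolding Bw_def by (rule someI_ex) (use nwP[of m] in blast)
      have nwmin: "\<not> fin m B" if "n < nw m" "B \<in> Bn n" "x \<in> B" for m n B
        using not_less_Least[OF that(1)[unfolded nw_def]] that(2,3) by blast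
      have selw: "ex (nw m) x \<and> sel (nw m) x = Bw m" for m
      proof -
        have e: "ex (nw m) x" unfolding ex_def using Bw[of m] BU by blast
        have s1: "sel (nw m) x \<in> Bn (nw m)" "x \<in> U (nw m) (sel (nw m) x)" using selU[OF e] by auto
        have b1: "Bw m \<in> Bn (nw m)" "x \<in> Bw m" using Bw[of m] by auto
        have b2: "x \<in> U (nw m) (Bw m)" using BU[OF b1(1)] b1(2) by blast
        have "sel (nw m) x = Bw m" by (rule uniq[OF x s1(1) b1(1) s1(2) b2])
        then show ?thesis using e by blast
      qed
      have finBw: "d (f x) (yB (Bw m)) < 1/2^m" for m
        using Bw[of m] unfolding fin_def by blast
      have tvw: "tv k m (nw m) x = 1" for k m
        unfolding tv_def using selw[of m] Bw[of m] \<phi>1 \<psi>1 by simp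
      have tv_ev: "eventually (\<lambda>k. tv k m n x = 0) sequentially" if nm: "n < nw m" for m n
      proof (cases "ex n x \<and> fin m (sel n x)")
        case True
        have B': "sel n x \<in> Bn n" "x \<in> U n (sel n x)" using selU True by auto
        have "x \<notin> sel n x" using nwmin[OF nm B'(1)] True by blast
        then have lt: "\<phi> n (sel n x) x < 1" using \<phi>lt[OF B'(1) x] by blast
        define q where "q = 1 - \<phi> n (sel n x) x"
        have q: "q > 0" unfolding q_def using lt by simp
        obtain K :: nat where K: "1/q < real K" using reals_Archimedean2 by blast
        have "tv k m n x = 0" if "K \<le> k" for k
        proof -
          have "1 < real K * q" using K q by (simp add: field_simps)
          also have "\<dots> \<le> (real k + 1) * q" using that q by (intro mult_right_mono) auto
          finally have "1 - (real k + 1) * (1 - \<phi> n (sel n x) x) \<le> 0" unfolding q_def by simp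
          then show ?thesis unfolding tv_def \<psi>_def using True by simp
        qed
        then show ?thesis unfolding eventually_sequentially by blast
      next
        case False
        then have "tv k m n x = 0" for k unfolding tv_def by (simp only: if_False)
        then show ?thesis by simp
      qed
      show ?thesis
        unfolding Yeq limitin_metric
      proof (intro conjI allI impI)
        show "f x \<in> Msp" by (rule fx)
        fix \<eta> :: real assume \<eta>: "\<eta> > 0"
        obtain n0 where n0: "1/2^n0 < \<eta>/2" using ex_pow2_small[of "\<eta>/2"] \<eta> by auto
        define \<epsilon> :: real where "\<epsilon> = 1/2^(Suc n0)"
        have \<epsilon>: "\<epsilon> > 0" "2 * \<epsilon> = 1/2^n0" unfolding \<epsilon>_def by auto
        have opm: "openin Y (mball (f x) \<epsilon>)" unfolding Yeq by simp
        have fxm: "f x \<in> mball (f x) \<epsilon>" using fx \<epsilon> by simp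
        obtain U' V' where UV: "openin Y U'" "path_connectedin Y V'" "f x \<in> U'" "U' \<subseteq> V'" "V' \<subseteq> mball (f x) \<epsilon>"
        proof -
          have "\<forall>W x. openin Y W \<and> x \<in> W \<longrightarrow> (\<exists>U V. openin Y U \<and> path_connectedin Y V \<and> x \<in> U \<and> U \<subseteq> V \<and> V \<subseteq> W)"
            using lpc unfolding locally_path_connected_space_def neighbourhood_base_of .
          then have "\<exists>U V. openin Y U \<and> path_connectedin Y V \<and> f x \<in> U \<and> U \<subseteq> V \<and> V \<subseteq> mball (f x) \<epsilon>"
            using opm fxm by blast
          then show ?thesis using that by blast
        qed
        obtain \<delta> where \<delta>: "\<delta> > 0" "mball (f x) \<delta> \<subseteq> U'"
          using UV(1,3) unfolding Yeq openin_mtopology by blast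
        define \<delta>' where "\<delta>' = min \<delta> \<epsilon>"
        have \<delta>': "\<delta>' > 0" "\<delta>' \<le> \<epsilon>" "mball (f x) \<delta>' \<subseteq> U'"
          unfolding \<delta>'_def using \<delta> \<epsilon> by (auto simp: mball_subset_concentric intro: order_trans[OF mball_subset_concentric])
        have short: "\<exists>g. pathin Y g \<and> g 0 = b \<and> g 1 = y \<and> (\<forall>t\<in>{0..1}. d b (g t) < 1/2^n0)"
          if b: "b \<in> Msp" "d b (f x) < \<delta>'" and y: "y \<in> Msp" "d y (f x) < \<delta>'" for b y
        proof -
          have "b \<in> V'" "y \<in> V'" using b y \<delta>'(3) UV(4) fx commute by (auto simp: subset_iff)
          then obtain g where g: "pathin Y g" "g \<in> {0..1} \<rightarrow> V'" "g 0 = b" "g 1 = y"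
            using UV(2) unfolding path_connectedin by blast
          have "d b (g t) < 1/2^n0" if t: "t \<in> {0..1}" for t
          proof -
            have gt: "g t \<in> mball (f x) \<epsilon>" using g(2) t UV(5) by blast
            then have "g t \<in> Msp" "d (f x) (g t) < \<epsilon>" by auto
            then have "d b (g t) \<le> d b (f x) + d (f x) (g t)" using triangle b fx by blast
            then show ?thesis using b \<delta>'(2) \<open>d (f x) (g t) < \<epsilon>\<close> \<epsilon>(2) by linarith
          qed
          then show ?thesis using g by blast
        qed
        obtain M0 where M0: "1/2^M0 < \<delta>'/9" using ex_pow2_small[of "\<delta>'/9"] \<delta>' by auto
        define M where "M = max M0 n0"
        have M: "n0 \<le> M" "9/2^M < \<delta>'"
        proof -
          show "n0 \<le> M" unfolding M_def by simp
          have "1/2^M \<le> (1::real)/2^M0" unfolding M_def by (rule pow2_mono) simp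
          then show "9/2^M < \<delta>'" using M0 by simp
        qed
        have ev: "eventually (\<lambda>k. (\<forall>m\<in>{..M}. \<forall>n\<in>{..<nw m}. tv k m n x = 0) \<and> M + Max (nw ` {..M}) \<le> k) sequentially"
          using tv_ev by (intro eventually_conj eventually_ball_finite ballI eventually_ge_at_top) auto
        show "eventually (\<lambda>k. fk k x \<in> Msp \<and> d (fk k x) (f x) < \<eta>) sequentially"
          using ev
        proof (rule eventually_mono, elim conjE)
          fix k assume k0: "\<forall>m\<in>{..M}. \<forall>n\<in>{..<nw m}. tv k m n x = 0" and k1: "M + Max (nw ` {..M}) \<le> k"
          have kM: "M \<le> k" using k1 by simp
          have knw: "nw m \<le> k" if "m \<le> M" for m
          proof -
            have "nw m \<le> Max (nw ` {..M})" using that by (intro Max_ge) auto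
            then show ?thesis using k1 by simp
          qed
          define base where "base j = (if j = 0 then y0 else yB (Bw (j - 1)))" for j
          have rowsj: "rows k x ! j = map (\<lambda>n. (tv k j n x, yB (sel n x))) [0..<Suc k]" if "j \<le> k" for j
            unfolding rows_def using that by (simp del: upt_Suc)
          have lenrows: "length (rows k x) = Suc k" unfolding rows_def by simp
          have step: "fk k x = Gfam cp P j (drop j (rows k x)) (base j) 1" if "j \<le> Suc M" for j
            using that
          proof (induction j)
            case 0
            then show ?case unfolding fk_def base_def by simp
          next
            case (Suc j)
            have jM: "j \<le> M" using Suc.prems by simp
            have jk: "j < length (rows k x)" using jM kM lenrows by simp
            have dr: "drop j (rows k x) = rows k x ! j # drop (Suc j) (rows k x)"
              using jk by (rule Cons_nth_drop_Suc[symmetric])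
            have cpj: "cp j (base j) (yB (Bw j))"
            proof (cases j)
              case 0 then show ?thesis unfolding cp_def by simp
            next
              case (Suc j')
              have a: "d (f x) (yB (Bw j')) < 2/2^j" using finBw[of j'] Suc by simp
              have b: "d (f x) (yB (Bw j)) < 1/2^j" using finBw[of j] by simp
              have "d (yB (Bw j')) (yB (Bw j)) \<le> d (yB (Bw j')) (f x) + d (f x) (yB (Bw j))"
                using triangle yBin fx by blast
              also have "\<dots> < 4/2^j"
              proof -
                have e: "2/2^j = 2*(1/(2::real)^j)" "4/2^j = 4*(1/(2::real)^j)" by simp_all
                have "(0::real) < 1/2^j" by simp
                then show ?thesis using a b e commute[of "yB (Bw j')" "f x"] by linarith
              qed
              finally show ?thesis unfolding cp_def base_def using Suc by simp
            qed
            have "Grow cp P j (rows k x ! j) (Gfam cp P (Suc j) (drop (Suc j) (rows k x))) (base j) 1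
                  = Gfam cp P (Suc j) (drop (Suc j) (rows k x)) (yB (Bw j)) 1"
            proof (rule Grow_win)
              show "nw j < length (rows k x ! j)" using rowsj[of j] jM kM knw[OF jM] by simp
              show "rows k x ! j ! nw j = (1, yB (Bw j))"
                using rowsj[of j] jM kM knw[OF jM] tvw selw by (simp del: upt_Suc)
              show "cp j (base j) (yB (Bw j))" by (rule cpj)
              show "\<forall>i<nw j. fst (rows k x ! j ! i) = 0"
                using rowsj[of j] jM kM knw[OF jM] k0 by (auto simp del: upt_Suc)
            qed
            then show ?case using Suc.IH jM dr by (simp add: base_def)
          qed
          have main: "fk k x = Gfam cp P (Suc M) (drop (Suc M) (rows k x)) (yB (Bw M)) 1"
            using step[of "Suc M"] by (simp add: base_def)
          define S where "S m b \<longleftrightarrow> Suc M \<le> m \<and> b \<in> Msp \<and> d b (f x) < 9/2^M - 8/2^m" for m b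
          define R where "R = {z \<in> Msp. d z (f x) < \<eta>}"
          have "Gfam cp P (Suc M) (drop (Suc M) (rows k x)) (yB (Bw M)) 1 \<in> R"
          proof (rule Gfam_bound[where S=S and A=Msp])
            show "b \<in> R" if "S m b" for m b
            proof -
              have "(0::real) < 8/2^m" by simp
              then have "d b (f x) < \<delta>'" using that M(2) unfolding S_def by linarith
              then show ?thesis using that \<delta>'(2) \<epsilon>(2) n0 \<epsilon>(1) unfolding S_def R_def by auto
            qed
            show "S (Suc m) y" if "S m b" "cp m b y" "y \<in> Msp" for m b y
            proof -
              have m1: "m \<noteq> 0" using that(1) unfolding S_def by simp
              have "d b y < 4/2^m" using that(2) m1 unfolding cp_def by simp
              moreover have "d y (f x) \<le> d y b + d b (f x)" using triangle that(3) fx that(1) unfolding S_def by blast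
              ultimately have "d y (f x) < 9/2^M - 8/2^m + 4/2^m" using that(1) commute[of y b] unfolding S_def by linarith
              then show ?thesis using that unfolding S_def by simp
            qed
            show "P m b y t \<in> R" if "S m b" "cp m b y" "y \<in> Msp" "0 \<le> t" "t \<le> 1" for m b y t
            proof -
              have bM: "b \<in> Msp" and mM: "Suc M \<le> m" using that(1) unfolding S_def by auto
              have "(0::real) < 8/2^m" by simp
              then have db: "d b (f x) < \<delta>'" using that(1) M(2) unfolding S_def by linarith
              have "S (Suc m) y" using \<open>\<And>m b y. S m b \<Longrightarrow> cp m b y \<Longrightarrow> y \<in> Msp \<Longrightarrow> S (Suc m) y\<close> that by blast
              moreover have "(0::real) < 8/2^(Suc m)" by simp
              ultimately have dy: "d y (f x) < \<delta>'" using M(2) unfolding S_def by linarith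
              have ps: "Pspec m b y (P m b y)" using Pok[OF bM that(3)] .
              have n0m: "n0 \<le> m" using M(1) mM by linarith
              have imp: "(\<exists>g'. pathin Y g' \<and> g' 0 = b \<and> g' 1 = y \<and> (\<forall>t\<in>{0..1}. d b (g' t) < 1/2^n0)) \<longrightarrow> (\<forall>t\<in>{0..1}. d b (P m b y t) < 1/2^n0)"
                using ps n0m unfolding Pspec_def by blast
              have "\<forall>t\<in>{0..1}. d b (P m b y t) < 1/2^n0"
                using imp short[OF bM db that(3) dy] by (rule mp)
              then have d1: "d b (P m b y t) < 1/2^n0" using that(4,5) by auto
              have pth: "pathin Y (P m b y)" using ps unfolding Pspec_def by blast
              have "P m b y ` topspace (top_of_set {0..1::real}) \<subseteq> topspace Y"
                using pth unfolding pathin_def by (rule continuous_map_image_subset_topspace)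
              then have Pin: "P m b y t \<in> Msp" using that(4,5) tY by auto
              have "d (P m b y t) (f x) \<le> d (P m b y t) b + d b (f x)" using triangle Pin bM fx by blast
              then have "d (P m b y t) (f x) < 1/2^n0 + \<delta>'" using d1 db commute[of b "P m b y t"] by linarith
              then show ?thesis unfolding R_def using Pin \<delta>'(2) \<epsilon>(2) n0 \<epsilon>(1) by auto
            qed
            show "\<forall>r\<in>set (drop (Suc M) (rows k x)). \<forall>e\<in>set r. snd e \<in> Msp"
            proof -
              have allr: "\<forall>r\<in>set (rows k x). \<forall>e\<in>set r. snd e \<in> Msp"
                unfolding rows_def using yBin by (auto simp del: upt_Suc)
              then show ?thesis using set_drop_subset[of "Suc M" "rows k x"] by blast
            qed
            have "d (yB (Bw M)) (f x) < 1/2^M" using finBw[of M] commute[of "yB (Bw M)" "f x"] by simp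
            moreover have "(1::real)/2^M \<le> 5/2^M" by (simp add: divide_right_mono)
            moreover have "(9::real)/2^M - 8/2^(Suc M) = 5/2^M" by (simp add: field_simps)
            ultimately show "S (Suc M) (yB (Bw M))" unfolding S_def using yBin by simp
          qed
          then show "fk k x \<in> Msp \<and> d (fk k x) (f x) < \<eta>" using main unfolding R_def by simp
        qed
      qed
    qed
    show ?thesis unfolding Baire_one_def using fX cont conv by blast
  qed
qed


theorem mainTheorem6:
  fixes X :: "'a topology" and Y :: "'b topology"
  assumes "metrizable_space Y" and "connected_space Y" and "locally_arc_connected_space Y"
  shows "Sigma_f_star_0 X Y \<subseteq> Baire_one X Y"
  using assms by (rule main6)

end
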